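(* Let $d\ge3$ and $\beta>0$. Then as $\varepsilon\to0$, \[\mathcal{B}_{\mathrm{Ising}}(\pi^*_\varepsilon,\beta,d)=\log2+\frac d2\log\frac{1+e^{-\beta}}{2}+\frac{4\varepsilon^4d\,e^{-2\beta}(e^\beta-1)^2\left(e^{2\beta}(d-2)-2de^\beta+d-2\right)}{(1+e^\beta)^2(1+e^{-\beta})^2}+O(\varepsilon^5),\] where $\pi^*_\varepsilon=\frac12(\delta_{2\varepsilon}+\delta_{-2\varepsilon})$.
   Context: For a probability measure $\pi$ on $[-1,1]$ let $(\mu_{\pi,i})_{i\ge1}$ be independent samples from $\pi$, let $\Lambda(x)=x\log x$, and \[\mathcal{B}_{\mathrm{Ising}}(\pi,\beta,d)=\mathbb{E}\left[\frac{\Lambda\left(\sum_{\sigma\in\{\pm1\}}\prod_{i=1}^d\left(1-(1-e^{-\beta})\frac{1+\sigma\mu_{\pi,i}}{2}\right)\right)}{2^{1-d}(1+e^{-\beta})^d}-\frac{d\,\Lambda\left(1-(1-e^{-\beta})\frac{1+\mu_{\pi,1}\mu_{\pi,2}}{2}\right)}{1+e^{-\beta}}\right].\] $\delta_x$ is the point mass at $x$. *)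

theory Defs
  imports "HOL-Probability.Probability" "HOL-Library.Landau_Symbols"
begin

definition Lam :: "real \<Rightarrow> real" where
  "Lam x = x * ln x"

definition wgt :: "real \<Rightarrow> real \<Rightarrow> real" where
  "wgt \<beta> x = 1 - (1 - exp (-\<beta>)) * (1 + x) / 2"

text \<open>Bethe functional. The i.i.d. samples (mu_{pi,i})_{i>=1} are modelled as the
coordinates 0,1,2,... of the infinite product measure of copies of pi.\<close>
definition B_Ising :: "real measure \<Rightarrow> real \<Rightarrow> nat \<Rightarrow> real" where
  "B_Ising \<pi> \<beta> d =
     (\<integral>\<mu>. ( Lam (\<Sum>\<sigma>\<in>{1::real, -1}. \<Prod>i<d. wgt \<beta> (\<sigma> * \<mu> i))
                / (2 powr (1 - real d) * (1 + exp (-\<beta>)) ^ d)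
            - real d * Lam (wgt \<beta> (\<mu> 0 * \<mu> 1)) / (1 + exp (-\<beta>)))
       \<partial>(PiM (UNIV :: nat set) (\<lambda>_. \<pi>)))"

definition pi_star :: "real \<Rightarrow> real measure" where
  "pi_star \<epsilon> = measure_pmf (pmf_of_set {2 * \<epsilon>, - 2 * \<epsilon>})"

end

theory Submission
  imports Defs "HOL-Real_Asymp.Real_Asymp"
begin

lemma pps: "product_prob_space (\<lambda>_::nat. pi_star e)"
  unfolding product_prob_space_def product_prob_space_axioms_def product_sigma_finite_def
  by (auto simp: pi_star_def prob_space_measure_pmf intro: prob_space_imp_sigma_finite)

lemma ps: "prob_space (PiM (UNIV::nat set) (\<lambda>_. pi_star e))"
proof -
  interpret product_prob_space "\<lambda>_::nat. pi_star e" "UNIV::nat set" by (rule pps)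
  show ?thesis by (rule P.prob_space_axioms)
qed

lemma AE_supp:
  assumes "e \<noteq> 0"
  shows "AE \<mu> in PiM (UNIV::nat set) (\<lambda>_. pi_star e). \<forall>i<d. \<mu> i \<in> {2*e, -2*e}"
proof -
  have "AE \<mu> in PiM (UNIV::nat set) (\<lambda>_. pi_star e). \<mu> i \<in> {2*e, -2*e}" for i
    apply (rule AE_PiM_component)
      apply (simp add: pi_star_def prob_space_measure_pmf)
     apply simp
    unfolding pi_star_def by (rule AE_mp[OF AE_measure_pmf]) auto
  then have "AE \<mu> in PiM (UNIV::nat set) (\<lambda>_. pi_star e). \<forall>i\<in>{..<d}. \<mu> i \<in> {2*e, -2*e}"
    by (intro eventually_ball_finite) auto
  then show ?thesis by (rule eventually_mono) auto
qed

lemma E_prod: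
  fixes f :: "nat \<Rightarrow> real \<Rightarrow> real"
  shows
  "(\<integral>\<mu>. (\<Prod>i<d. f i (\<mu> i)) \<partial>PiM (UNIV::nat set) (\<lambda>_. pi_star e)) = (\<Prod>i<d. \<integral>x. f i x \<partial>pi_star e)"
proof -
  interpret product_prob_space "\<lambda>_::nat. pi_star e" "UNIV::nat set" by (rule pps)
  have D: "distr (PiM UNIV (\<lambda>_. pi_star e)) (PiM {..<d} (\<lambda>_. pi_star e)) (\<lambda>x. restrict x {..<d}) = PiM {..<d} (\<lambda>_. pi_star e)"
    by (rule distr_PiM_restrict_finite) auto
  have m: "(\<lambda>x. \<Prod>i<d. f i (x i)) \<in> borel_measurable (PiM {..<d} (\<lambda>_. pi_star e))"
  proof (rule borel_measurable_prod)
    fix i assume i: "i \<in> {..<d}"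
    have "(\<lambda>x. x i) \<in> measurable (PiM {..<d} (\<lambda>_. pi_star e)) (pi_star e)"
      using i by (rule measurable_component_singleton)
    then show "(\<lambda>x. f i (x i)) \<in> borel_measurable (PiM {..<d} (\<lambda>_. pi_star e))"
      by (rule measurable_compose) (simp add: pi_star_def)
  qed
  have "(\<integral>x. (\<Prod>i<d. f i (x i)) \<partial>PiM {..<d} (\<lambda>_. pi_star e)) = (\<Prod>i<d. \<integral>x. f i x \<partial>pi_star e)"
    by (rule product_integral_prod) (auto simp: pi_star_def intro!: integrable_measure_pmf_finite)
  moreover have "(\<integral>x. (\<Prod>i<d. f i (x i)) \<partial>PiM {..<d} (\<lambda>_. pi_star e)) = (\<integral>\<mu>. (\<Prod>i<d. f i (\<mu> i)) \<partial>PiM UNIV (\<lambda>_. pi_star e))"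
    apply (subst D[symmetric])
    apply (subst integral_distr)
      apply (rule measurable_restrict_subset, simp)
     apply (rule m)
    apply simp
    done
  ultimately show ?thesis by simp
qed

lemma comp_meas[measurable]: "(\<lambda>x. x i) \<in> borel_measurable (PiM (UNIV::nat set) (\<lambda>_. pi_star e))"
proof -
  have "(\<lambda>x. x i) \<in> measurable (PiM UNIV (\<lambda>_. pi_star e)) (pi_star e)"
    by (rule measurable_component_singleton) simp
  then show ?thesis by (rule measurable_compose[where g="\<lambda>x. x"]) (simp add: pi_star_def)
qed

lemma integrable_fin:
  fixes f :: "(nat \<Rightarrow> real) \<Rightarrow> real"
  assumes "e \<noteq> 0" "f \<in> borel_measurable (PiM (UNIV::nat set) (\<lambda>_. pi_star e))"
    and dep: "\<And>\<mu> \<nu>. (\<And>i. i < d \<Longrightarrow> \<mu> i = \<nu> i) \<Longrightarrow> f \<mu> = f \<nu>"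
  shows "integrable (PiM (UNIV::nat set) (\<lambda>_. pi_star e)) f"
proof -
  interpret prob_space "PiM (UNIV::nat set) (\<lambda>_. pi_star e)" by (rule ps)
  define S where "S = PiE {..<d} (\<lambda>_. {2*e, -2*e})"
  have fin: "finite S" unfolding S_def by (intro finite_PiE) auto
  define B where "B = Max ((\<lambda>\<nu>. \<bar>f \<nu>\<bar>) ` S)"
  have "AE \<mu> in PiM (UNIV::nat set) (\<lambda>_. pi_star e). norm (f \<mu>) \<le> B"
    using AE_supp[OF assms(1), of d]
  proof (rule eventually_mono)
    fix \<mu> :: "nat \<Rightarrow> real" assume H: "\<forall>i<d. \<mu> i \<in> {2*e, -2*e}"
    have "restrict \<mu> {..<d} \<in> S" unfolding S_def using H by auto
    moreover have "f \<mu> = f (restrict \<mu> {..<d})" by (rule dep) simp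
    ultimately show "norm (f \<mu>) \<le> B" unfolding B_def using fin by (auto intro!: Max_ge)
  qed
  then show ?thesis using assms(2) by (rule integrable_const_bound)
qed

lemma E_pi: "e \<noteq> 0 \<Longrightarrow> (\<integral>x. f x \<partial>pi_star e) = (f (2*e) + f (-2*e)) / (2::real)"
  unfolding pi_star_def by (subst integral_pmf_of_set) auto



lemma h_cubic: "\<exists>C \<delta>. C > 0 \<and> \<delta> > 0 \<and> (\<forall>x::real. \<bar>x\<bar> < \<delta> \<longrightarrow> \<bar>(1+x)*ln(1+x) - x - x^2/2\<bar> \<le> C*\<bar>x\<bar>^3)"
proof -
  have "(\<lambda>x::real. (1+x)*ln(1+x) - x - x^2/2) \<in> O[at 0](\<lambda>x. x^3)" by real_asymp
  then obtain C where C: "C > 0" and ev: "eventually (\<lambda>x. norm ((1+x)*ln(1+x) - x - x^2/2) \<le> C * norm (x^3)) (at (0::real))"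
    by (elim landau_o.bigE)
  then obtain \<delta> where d: "\<delta> > 0" and H: "\<And>x::real. x \<noteq> 0 \<Longrightarrow> dist x 0 < \<delta> \<Longrightarrow> norm ((1+x)*ln(1+x) - x - x^2/2) \<le> C * norm (x^3)"
    unfolding eventually_at by blast
  have "\<bar>(1+x)*ln(1+x) - x - x^2/2\<bar> \<le> C*\<bar>x\<bar>^3" if "\<bar>x\<bar> < \<delta>" for x::real
  proof (cases "x = 0")
    case True then show ?thesis by simp
  next
    case False then show ?thesis using H[of x] that by (simp add: power_abs)
  qed
  with d C show ?thesis by blast
qed

lemma binom_cubic: "\<exists>K. \<forall>y::real. \<bar>y\<bar> \<le> 1 \<longrightarrow> \<bar>(1+y)^d - 1 - real d*y - real d*(real d - 1)/2*y^2\<bar> \<le> K*\<bar>y\<bar>^3"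
proof (induction d)
  case 0 then show ?case by (intro exI[of _ 0]) simp
next
  case (Suc d)
  then obtain K where K: "\<And>y::real. \<bar>y\<bar> \<le> 1 \<Longrightarrow> \<bar>(1+y)^d - 1 - real d*y - real d*(real d - 1)/2*y^2\<bar> \<le> K*\<bar>y\<bar>^3" by blast
  have "\<bar>(1+y)^Suc d - 1 - real (Suc d)*y - real (Suc d)*(real (Suc d) - 1)/2*y^2\<bar> \<le> (2*\<bar>K\<bar> + real d*real d)*\<bar>y\<bar>^3"
    if y: "\<bar>y\<bar> \<le> 1" for y::real
  proof -
    define R where "R = (1+y)^d - 1 - real d*y - real d*(real d - 1)/2*y^2"
    have eq: "(1+y)^Suc d - 1 - real (Suc d)*y - real (Suc d)*(real (Suc d) - 1)/2*y^2 = (1+y)*R + real d*(real d - 1)/2*y^3"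
      unfolding R_def by (simp add: algebra_simps power2_eq_square power3_eq_cube add_divide_distrib diff_divide_distrib)
    have R: "\<bar>R\<bar> \<le> \<bar>K\<bar>*\<bar>y\<bar>^3" using K[OF y] unfolding R_def
      by (meson abs_ge_self dual_order.trans mult_right_mono zero_le_power abs_ge_zero)
    have A: "\<bar>(1+y)*R\<bar> \<le> 2*(\<bar>K\<bar>*\<bar>y\<bar>^3)"
      unfolding abs_mult using y R by (intro mult_mono) auto
    have B: "\<bar>real d*(real d - 1)/2*y^3\<bar> \<le> real d * real d * \<bar>y\<bar>^3"
    proof -
      have "\<bar>real d*(real d - 1)/2\<bar> \<le> real d * real d"
        by (cases d) (auto simp: algebra_simps)
      then show ?thesis unfolding abs_mult power_abs by (intro mult_right_mono) auto
    qed
    have "\<bar>(1+y)*R + real d*(real d - 1)/2*y^3\<bar> \<le> \<bar>(1+y)*R\<bar> + \<bar>real d*(real d - 1)/2*y^3\<bar>" by (rule abs_triangle_ineq)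
    also have "\<dots> \<le> 2*(\<bar>K\<bar>*\<bar>y\<bar>^3) + real d * real d * \<bar>y\<bar>^3" by (rule add_mono[OF A B])
    also have "\<dots> = (2*\<bar>K\<bar> + real d*real d)*\<bar>y\<bar>^3" by (simp add: algebra_simps)
    finally show ?thesis unfolding eq .
  qed
  then show ?case by blast
qed

lemma prod_lin_bound:
  fixes a :: "nat \<Rightarrow> real"
  assumes "\<And>i. i < n \<Longrightarrow> \<bar>a i\<bar> \<le> b" "0 \<le> b"
  shows "\<bar>(\<Prod>i<n. 1 + a i) - 1\<bar> \<le> real n * b * (1+b)^n"
  using assms(1)
proof (induction n)
  case 0 then show ?case by simp
next
  case (Suc n)
  have IH: "\<bar>(\<Prod>i<n. 1 + a i) - 1\<bar> \<le> real n * b * (1+b)^n" using Suc by auto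
  have an: "\<bar>a n\<bar> \<le> b" using Suc by auto
  have eq: "(\<Prod>i<Suc n. 1 + a i) - 1 = ((\<Prod>i<n. 1 + a i) - 1) * (1 + a n) + a n"
    by (simp add: algebra_simps)
  have A: "\<bar>((\<Prod>i<n. 1 + a i) - 1) * (1 + a n)\<bar> \<le> (real n * b * (1+b)^n) * (1+b)"
    unfolding abs_mult using IH an assms(2) by (intro mult_mono) auto
  have B: "b \<le> b * (1+b)^Suc n"
    using assms(2) mult_left_mono[OF one_le_power[of "1+b" "Suc n"], of b] by simp
  have "\<bar>((\<Prod>i<n. 1 + a i) - 1) * (1 + a n) + a n\<bar> \<le> \<bar>((\<Prod>i<n. 1 + a i) - 1) * (1 + a n)\<bar> + \<bar>a n\<bar>" by (rule abs_triangle_ineq)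
  also have "\<dots> \<le> (real n * b * (1+b)^n) * (1+b) + b * (1+b)^Suc n" using A B an by linarith
  also have "\<dots> = real (Suc n) * b * (1+b)^Suc n" by (simp add: algebra_simps)
  finally show ?case unfolding eq .
qed



lemma prod_cmult: "(\<Prod>i<n. (a::real) * f i) = a ^ n * (\<Prod>i<n. f i)"
  by (simp add: prod.distrib)

lemma dep_lemma:
  fixes g :: "real \<Rightarrow> real \<Rightarrow> real \<Rightarrow> real \<Rightarrow> real" and \<mu> \<nu> :: "nat \<Rightarrow> real"
  assumes d: "d \<ge> 2" and H: "\<And>i. i < d \<Longrightarrow> \<mu> i = \<nu> i"
  shows "g (\<mu> 0) (\<mu> 1) (\<Prod>i<d. 1 + q * \<mu> i) (\<Prod>i<d. 1 - q * \<mu> i)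
      = g (\<nu> 0) (\<nu> 1) (\<Prod>i<d. 1 + q * \<nu> i) (\<Prod>i<d. 1 - q * \<nu> i)"
proof -
  have "\<mu> 0 = \<nu> 0" "\<mu> 1 = \<nu> 1" using H d by auto
  moreover have "(\<Prod>i<d. 1 + q * \<mu> i) = (\<Prod>i<d. 1 + q * \<nu> i)" "(\<Prod>i<d. 1 - q * \<mu> i) = (\<Prod>i<d. 1 - q * \<nu> i)"
    using H by (auto intro!: prod.cong)
  ultimately show ?thesis by simp
qed

lemma core:
  fixes d :: nat and \<beta> e C \<delta> :: real
  assumes d: "d \<ge> 3" and \<beta>: "\<beta> > 0" and e0: "e \<noteq> 0"
    and hC: "\<And>x::real. \<bar>x\<bar> < \<delta> \<Longrightarrow> \<bar>(1+x)*ln(1+x) - x - x^2/2\<bar> \<le> C*\<bar>x\<bar>^3" and C0: "C > 0"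
    and e1: "\<bar>e\<bar> < 1/2" and e2: "4*e^2 < \<delta>"
    and e3: "real d * 2 * 2^d * \<bar>e\<bar> < \<delta>" and e4: "real d * 2 * 2^d * \<bar>e\<bar> < 1"
  defines "c \<equiv> exp (-\<beta>)"
  defines "q \<equiv> (1 - c) / (1 + c)"
  defines "W \<equiv> ((1 + 4*q^2*e^2)^d + (1 - 4*q^2*e^2)^d)/2 - 1"
  shows "\<bar>B_Ising (pi_star e) \<beta> d - (ln 2 + real d / 2 * ln ((1 + c) / 2) + W/2 - real d / 2 * q^2 * 8 * e^4)\<bar>
          \<le> C * (real d * 2 * 2^d * \<bar>e\<bar>) * W + real d / 2 * C * (4*e^2)^3"
proof -
  let ?M = "PiM (UNIV::nat set) (\<lambda>_. pi_star e)"
  interpret prob_space ?M by (rule ps)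
  have c0: "0 < c" "c < 1" unfolding c_def using \<beta> by auto
  have q0: "0 < q" "q < 1" unfolding q_def using c0 by (auto simp: field_simps)
  define K where "K = real d * 2 * 2^d"
  have eK: "K * \<bar>e\<bar> < \<delta>" "K * \<bar>e\<bar> < 1" using e3 e4 unfolding K_def by auto
  define Pp where "Pp = (\<lambda>\<mu>::nat\<Rightarrow>real. \<Prod>i<d. 1 + q * \<mu> i)"
  define Pm where "Pm = (\<lambda>\<mu>::nat\<Rightarrow>real. \<Prod>i<d. 1 - q * \<mu> i)"
  define T where "T = (\<lambda>\<mu>. (Pp \<mu> + Pm \<mu>) / 2)"
  define m where "m = (\<lambda>\<mu>::nat\<Rightarrow>real. \<mu> 0 * \<mu> 1)"
  define r where "r = (\<lambda>x::real. (1+x)*ln(1+x) - x - x^2/2)"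
  define N where "N = 2 powr (1 - real d) * (1 + c) ^ d"
  have N0: "N > 0" unfolding N_def using c0 by auto
  have wgt: "wgt \<beta> x = (1 + c) / 2 * (1 - q * x)" for x
  proof -
    have w: "wgt \<beta> x = 1 - (1 - c) * (1 + x) / 2" unfolding wgt_def c_def ..
    have "1 + c \<noteq> 0" using c0 by auto
    then show ?thesis unfolding w q_def by (simp add: field_simps)
  qed
  have sumeq: "(\<Sum>\<sigma>\<in>{1::real, -1}. \<Prod>i<d. wgt \<beta> (\<sigma> * \<mu> i)) = N * T \<mu>" for \<mu>
  proof -
    have "(\<Sum>\<sigma>\<in>{1::real, -1}. \<Prod>i<d. wgt \<beta> (\<sigma> * \<mu> i)) = (\<Prod>i<d. wgt \<beta> (\<mu> i)) + (\<Prod>i<d. wgt \<beta> (- \<mu> i))"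
      by simp
    also have "\<dots> = ((1+c)/2)^d * (Pm \<mu> + Pp \<mu>)"
      unfolding wgt Pp_def Pm_def prod_cmult by (simp add: distrib_left)
    also have "\<dots> = N * T \<mu>"
      unfolding N_def T_def by (simp add: powr_diff powr_realpow power_divide field_simps)
    finally show ?thesis .
  qed
  have mT: "T \<in> borel_measurable ?M" unfolding T_def Pp_def Pm_def by measurable
  have mm: "m \<in> borel_measurable ?M" unfolding m_def by measurable
  have mr: "r \<in> borel_measurable borel" unfolding r_def by measurable
  have iT: "integrable ?M T"
    using d by (intro integrable_fin[OF e0 mT, of d]) (unfold T_def Pp_def Pm_def, rule dep_lemma[where g="\<lambda>a b x y. (x + y)/2"], auto)
  have mPp[measurable]: "Pp \<in> borel_measurable ?M" unfolding Pp_def by measurable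
  have mPm[measurable]: "Pm \<in> borel_measurable ?M" unfolding Pm_def by measurable
  note mT[measurable] mm[measurable] mr[measurable]
  have iG: "integrable ?M (\<lambda>\<mu>. g (\<mu> 0) (\<mu> 1) (Pp \<mu>) (Pm \<mu>))"
    if "(\<lambda>\<mu>. g (\<mu> 0) (\<mu> 1) (Pp \<mu>) (Pm \<mu>)) \<in> borel_measurable ?M" for g :: "real \<Rightarrow> real \<Rightarrow> real \<Rightarrow> real \<Rightarrow> real"
    using d by (intro integrable_fin[OF e0 that, of d]) (unfold Pp_def Pm_def, rule dep_lemma, auto)
  have iPp: "integrable ?M Pp" using iG[of "\<lambda>a b x y. x"] by simp
  have iPm: "integrable ?M Pm" using iG[of "\<lambda>a b x y. y"] by simp
  have iPp2: "integrable ?M (\<lambda>\<mu>. Pp \<mu> ^ 2)" using iG[of "\<lambda>a b x y. x^2"] by simp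
  have iPm2: "integrable ?M (\<lambda>\<mu>. Pm \<mu> ^ 2)" using iG[of "\<lambda>a b x y. y^2"] by simp
  have iPpm: "integrable ?M (\<lambda>\<mu>. Pp \<mu> * Pm \<mu>)" using iG[of "\<lambda>a b x y. x*y"] by simp
  have im: "integrable ?M m" using iG[of "\<lambda>a b x y. a*b"] unfolding m_def by simp
  have ir1: "integrable ?M (\<lambda>\<mu>. r (T \<mu> - 1))" using iG[of "\<lambda>a b x y. r ((x+y)/2 - 1)"] unfolding T_def by simp
  have ir2: "integrable ?M (\<lambda>\<mu>. r (- q * m \<mu>))" using iG[of "\<lambda>a b x y. r (- q * (a*b))"] unfolding m_def by simp
  have iar1: "integrable ?M (\<lambda>\<mu>. \<bar>r (T \<mu> - 1)\<bar>)" using iG[of "\<lambda>a b x y. \<bar>r ((x+y)/2 - 1)\<bar>"] unfolding T_def by simp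
  have iar2: "integrable ?M (\<lambda>\<mu>. \<bar>r (- q * m \<mu>)\<bar>)" using iG[of "\<lambda>a b x y. \<bar>r (- q * (a*b))\<bar>"] unfolding m_def by simp
  define y where "y = 4*q^2*e^2"
  have EPp: "integral\<^sup>L ?M Pp = 1"
    unfolding Pp_def using E_prod[where f="\<lambda>i x. 1 + q * x" and d=d and e=e] E_pi[OF e0] by simp
  have EPm: "integral\<^sup>L ?M Pm = 1"
    unfolding Pm_def using E_prod[where f="\<lambda>i x. 1 - q * x" and d=d and e=e] E_pi[OF e0] by simp
  have EPp2: "integral\<^sup>L ?M (\<lambda>\<mu>. Pp \<mu> ^ 2) = (1 + y)^d"
  proof -
    have "integral\<^sup>L ?M (\<lambda>\<mu>. Pp \<mu> ^ 2) = integral\<^sup>L ?M (\<lambda>\<mu>. \<Prod>i<d. (\<lambda>x. (1 + q*x)^2) (\<mu> i))"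
      unfolding Pp_def by (simp add: prod_power_distrib)
    also have "\<dots> = (\<Prod>i<d. \<integral>x. (1 + q*x)^2 \<partial>pi_star e)" by (rule E_prod[where f="\<lambda>i x. (1 + q*x)^2"])
    also have "\<dots> = (\<Prod>i<d. (1 + y))"
    proof -
      have "(\<integral>x. (1 + q*x)^2 \<partial>pi_star e) = 1 + y" unfolding E_pi[OF e0] y_def by (simp add: power2_eq_square field_simps)
      then show ?thesis by simp
    qed
    finally show ?thesis by simp
  qed
  have EPm2: "integral\<^sup>L ?M (\<lambda>\<mu>. Pm \<mu> ^ 2) = (1 + y)^d"
  proof -
    have "integral\<^sup>L ?M (\<lambda>\<mu>. Pm \<mu> ^ 2) = integral\<^sup>L ?M (\<lambda>\<mu>. \<Prod>i<d. (\<lambda>x. (1 - q*x)^2) (\<mu> i))"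
      unfolding Pm_def by (simp add: prod_power_distrib)
    also have "\<dots> = (\<Prod>i<d. \<integral>x. (1 - q*x)^2 \<partial>pi_star e)" by (rule E_prod[where f="\<lambda>i x. (1 - q*x)^2"])
    also have "\<dots> = (\<Prod>i<d. (1 + y))"
    proof -
      have "(\<integral>x. (1 - q*x)^2 \<partial>pi_star e) = 1 + y" unfolding E_pi[OF e0] y_def by (simp add: power2_eq_square field_simps)
      then show ?thesis by simp
    qed
    finally show ?thesis by simp
  qed
  have EPpm: "integral\<^sup>L ?M (\<lambda>\<mu>. Pp \<mu> * Pm \<mu>) = (1 - y)^d"
  proof -
    have "integral\<^sup>L ?M (\<lambda>\<mu>. Pp \<mu> * Pm \<mu>) = integral\<^sup>L ?M (\<lambda>\<mu>. \<Prod>i<d. (\<lambda>x. (1 + q*x)*(1 - q*x)) (\<mu> i))"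
      unfolding Pp_def Pm_def by (simp add: prod.distrib)
    also have "\<dots> = (\<Prod>i<d. \<integral>x. (1 + q*x)*(1 - q*x) \<partial>pi_star e)" by (rule E_prod[where f="\<lambda>i x. (1 + q*x)*(1 - q*x)"])
    also have "\<dots> = (\<Prod>i<d. (1 - y))"
    proof -
      have "(\<integral>x. (1 + q*x)*(1 - q*x) \<partial>pi_star e) = 1 - y" unfolding E_pi[OF e0] y_def by (simp add: power2_eq_square field_simps)
      then show ?thesis by simp
    qed
    finally show ?thesis by simp
  qed
  have Em: "integral\<^sup>L ?M m = 0"
  proof -
    define k where "k = d - 2"
    have k: "d = Suc (Suc k)" unfolding k_def using d by simp
    have "m = (\<lambda>\<mu>. \<Prod>i<d. (\<lambda>i x. if i < 2 then x else 1) i (\<mu> i))"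
      unfolding m_def k by (rule ext) (simp del: prod.lessThan_Suc add: prod.lessThan_Suc_shift)
    then have "integral\<^sup>L ?M m = (\<Prod>i<d. \<integral>x. (\<lambda>i x. if i < 2 then x else 1) i x \<partial>pi_star e)"
      by (simp only: E_prod[where f="\<lambda>i x. if i < 2 then x else 1"])
    also have "\<dots> = 0" unfolding k by (simp del: prod.lessThan_Suc add: prod.lessThan_Suc_shift E_pi[OF e0])
    finally show ?thesis .
  qed
  have supp: "AE \<mu> in ?M. \<forall>i<d. \<mu> i \<in> {2*e, -2*e}" by (rule AE_supp[OF e0])
  have Tb: "\<bar>T \<mu> - 1\<bar> \<le> K*\<bar>e\<bar>" if H: "\<forall>i<d. \<mu> i \<in> {2*e, -2*e}" for \<mu>
  proof -
    have a: "\<bar>q * \<mu> i\<bar> \<le> 2*\<bar>e\<bar>" if "i<d" for i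
    proof -
      have "\<bar>\<mu> i\<bar> = 2*\<bar>e\<bar>" using H that by auto
      then have "\<bar>q * \<mu> i\<bar> = q * (2*\<bar>e\<bar>)" using q0 by (simp add: abs_mult)
      also have "\<dots> \<le> 2*\<bar>e\<bar>" using q0 by (intro mult_left_le_one_le) auto
      finally show ?thesis .
    qed
    have p: "\<bar>Pp \<mu> - 1\<bar> \<le> real d*(2*\<bar>e\<bar>)*(1+2*\<bar>e\<bar>)^d"
      unfolding Pp_def by (rule prod_lin_bound) (use a in auto)
    have n: "\<bar>Pm \<mu> - 1\<bar> \<le> real d*(2*\<bar>e\<bar>)*(1+2*\<bar>e\<bar>)^d"
      using prod_lin_bound[of d "\<lambda>i. -(q*\<mu> i)" "2*\<bar>e\<bar>"] a unfolding Pm_def by simp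
    have pw: "(1+2*\<bar>e\<bar>)^d \<le> 2^d" by (rule power_mono) (use e1 in auto)
    have X: "real d*(2*\<bar>e\<bar>)*(1+2*\<bar>e\<bar>)^d \<le> K*\<bar>e\<bar>"
    proof -
      have "real d*(2*\<bar>e\<bar>)*(1+2*\<bar>e\<bar>)^d \<le> real d*(2*\<bar>e\<bar>)*2^d"
        using pw by (intro mult_left_mono) auto
      then show ?thesis unfolding K_def by (simp add: algebra_simps)
    qed
    have "T \<mu> - 1 = ((Pp \<mu> - 1) + (Pm \<mu> - 1))/2" unfolding T_def by (simp add: field_simps)
    then show ?thesis using p n X by (simp add: abs_le_iff)
  qed
  have mv: "m \<mu> ^ 2 = 16*e^4" "\<bar>q * m \<mu>\<bar> \<le> 4*e^2" if H: "\<forall>i<d. \<mu> i \<in> {2*e, -2*e}" for \<mu>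
  proof -
    have "\<mu> 0 \<in> {2*e, -2*e}" "\<mu> 1 \<in> {2*e, -2*e}" using H d by auto
    then have mm: "\<bar>m \<mu>\<bar> = 4*e^2" unfolding m_def by (auto simp: abs_mult power2_eq_square)
    have "m \<mu> ^ 2 = \<bar>m \<mu>\<bar> ^ 2" by simp
    also have "\<dots> = 16*e^4" unfolding mm by (simp add: power_mult_distrib power2_eq_square power4_eq_xxxx)
    finally show "m \<mu> ^ 2 = 16*e^4" .
    have "\<bar>q * m \<mu>\<bar> = q * (4*e^2)" using mm q0 by (simp add: abs_mult)
    also have "\<dots> \<le> 4*e^2" using q0 by (intro mult_left_le_one_le) auto
    finally show "\<bar>q * m \<mu>\<bar> \<le> 4*e^2" .
  qed
  define L where "L = ln ((1+c)/2)"
  define A where "A = (\<lambda>\<mu>. ln N * T \<mu> + ((T \<mu> - 1) + (T \<mu> - 1)^2/2 + r (T \<mu> - 1))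
      - real d/2 * ((1 - q*m \<mu>)*L + r (-q*m \<mu>) - q*m \<mu> + q^2*8*e^4))"
  have Ieq: "Lam (\<Sum>\<sigma>\<in>{1::real,-1}. \<Prod>i<d. wgt \<beta> (\<sigma> * \<mu> i)) / N - real d * Lam (wgt \<beta> (\<mu> 0 * \<mu> 1)) / (1 + c) = A \<mu>"
    if H: "\<forall>i<d. \<mu> i \<in> {2*e, -2*e}" for \<mu>
  proof -
    have T0: "T \<mu> > 0" using Tb[OF H] eK by (simp add: abs_le_iff)
    have t1: "Lam (N * T \<mu>) / N = ln N * T \<mu> + ((T \<mu> - 1) + (T \<mu> - 1)^2/2 + r (T \<mu> - 1))"
      unfolding Lam_def r_def using N0 T0 by (simp add: ln_mult field_simps)
    have "(2*e)^2 < 1" using e1 by (subst abs_square_less_1) simp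
    then have e2': "4*e^2 < 1" by (simp add: power_mult_distrib)
    have qm: "1 - q * m \<mu> > 0" using mv(2)[OF H] e2' by (simp add: abs_le_iff)
    have c1: "(1 + c)/2 > 0" using c0 by simp
    have t2: "real d * Lam (wgt \<beta> (\<mu> 0 * \<mu> 1)) / (1 + c) = real d/2 * ((1 - q*m \<mu>)*L + r (-q*m \<mu>) - q*m \<mu> + q^2*8*e^4)"
    proof -
      have sq: "q^2*8*e^4 = (q * m \<mu>)^2/2" using mv(1)[OF H] by (simp add: power_mult_distrib)
      have lw: "Lam (wgt \<beta> (\<mu> 0 * \<mu> 1)) = (1+c)/2 * ((1 - q*m \<mu>) * (L + ln (1 - q*m \<mu>)))"
      proof -
        have w: "wgt \<beta> (\<mu> 0 * \<mu> 1) = (1+c)/2 * (1 - q*m \<mu>)" by (simp add: wgt m_def)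
        have l: "ln ((1+c)/2 * (1 - q*m \<mu>)) = L + ln (1 - q*m \<mu>)" unfolding L_def by (simp only: ln_mult) (use c1 qm in simp)
        show ?thesis unfolding Lam_def w l by (simp only: mult.assoc)
      qed
      have r2: "r (-q*m \<mu>) = (1 - q*m \<mu>) * ln (1 - q*m \<mu>) + q*m \<mu> - (q*m \<mu>)^2/2"
        unfolding r_def by (simp add: power2_eq_square)
      have "1 + c \<noteq> 0" using c0 by simp
      then show ?thesis unfolding lw r2 sq by (simp add: field_simps)
    qed
    show ?thesis unfolding sumeq t1 t2 A_def by simp
  qed
  have mA: "A \<in> borel_measurable ?M" unfolding A_def by measurable
  have mI: "(\<lambda>\<mu>. Lam (\<Sum>\<sigma>\<in>{1::real,-1}. \<Prod>i<d. wgt \<beta> (\<sigma> * \<mu> i)) / N - real d * Lam (wgt \<beta> (\<mu> 0 * \<mu> 1)) / (1 + c)) \<in> borel_measurable ?M"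
    unfolding Lam_def wgt_def by measurable
  have AEq: "AE \<mu> in ?M. Lam (\<Sum>\<sigma>\<in>{1::real,-1}. \<Prod>i<d. wgt \<beta> (\<sigma> * \<mu> i)) / N - real d * Lam (wgt \<beta> (\<mu> 0 * \<mu> 1)) / (1 + c) = A \<mu>"
    using supp by (rule eventually_mono) (rule Ieq)
  have BA: "B_Ising (pi_star e) \<beta> d = integral\<^sup>L ?M A"
    unfolding B_Ising_def c_def[symmetric] N_def[symmetric]
    by (rule integral_cong_AE[OF mI mA AEq])
  have iT1sq: "integrable ?M (\<lambda>\<mu>. (T \<mu> - 1)^2)" using iG[of "\<lambda>a b x y. ((x+y)/2 - 1)^2"] unfolding T_def by simp
  have ET: "integral\<^sup>L ?M T = 1" unfolding T_def using iPp iPm EPp EPm by simp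
  have ET1sq: "integral\<^sup>L ?M (\<lambda>\<mu>. (T \<mu> - 1)^2) = W"
  proof -
    have "(\<lambda>\<mu>. (T \<mu> - 1)^2) = (\<lambda>\<mu>. Pp \<mu>^2/4 + Pp \<mu> * Pm \<mu>/2 + Pm \<mu>^2/4 - Pp \<mu> - Pm \<mu> + 1)"
      by (rule ext) (simp add: T_def power2_eq_square field_simps)
    then show ?thesis using iPp iPm iPp2 iPm2 iPpm EPp EPm EPp2 EPm2 EPpm unfolding W_def y_def by (simp add: prob_space)
  qed
  have IA: "integral\<^sup>L ?M A = ln N + W/2 + integral\<^sup>L ?M (\<lambda>\<mu>. r (T \<mu> - 1))
       - real d/2 * (L + integral\<^sup>L ?M (\<lambda>\<mu>. r (-q*m \<mu>)) + q^2*8*e^4)"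
    unfolding A_def using iT iT1sq ir1 ir2 im ET ET1sq Em by (simp add: algebra_simps prob_space)
  have lnN: "ln N - real d/2 * L = ln 2 + real d/2 * L"
    unfolding N_def L_def using c0 by (simp add: ln_mult ln_powr ln_realpow ln_div algebra_simps)
  have R1: "\<bar>integral\<^sup>L ?M (\<lambda>\<mu>. r (T \<mu> - 1))\<bar> \<le> C*(K*\<bar>e\<bar>)*W"
  proof -
    have "\<bar>integral\<^sup>L ?M (\<lambda>\<mu>. r (T \<mu> - 1))\<bar> \<le> integral\<^sup>L ?M (\<lambda>\<mu>. \<bar>r (T \<mu> - 1)\<bar>)"
      using integral_norm_bound[of ?M "\<lambda>\<mu>. r (T \<mu> - 1)"] by simp
    also have "\<dots> \<le> integral\<^sup>L ?M (\<lambda>\<mu>. C*(K*\<bar>e\<bar>)*(T \<mu> - 1)^2)"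
    proof (rule integral_mono_AE[OF iar1])
      show "integrable ?M (\<lambda>\<mu>. C*(K*\<bar>e\<bar>)*(T \<mu> - 1)^2)" using iT1sq by simp
      show "AE \<mu> in ?M. \<bar>r (T \<mu> - 1)\<bar> \<le> C*(K*\<bar>e\<bar>)*(T \<mu> - 1)^2"
        using supp
      proof (rule eventually_mono)
        fix \<mu> :: "nat \<Rightarrow> real" assume H: "\<forall>i<d. \<mu> i \<in> {2*e, -2*e}"
        have u: "\<bar>T \<mu> - 1\<bar> \<le> K*\<bar>e\<bar>" by (rule Tb[OF H])
        then have "\<bar>T \<mu> - 1\<bar> < \<delta>" using eK by simp
        then have "\<bar>r (T \<mu> - 1)\<bar> \<le> C*\<bar>T \<mu> - 1\<bar>^3" unfolding r_def by (rule hC)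
        also have "\<dots> = C*(\<bar>T \<mu> - 1\<bar> * (T \<mu> - 1)^2)" by (simp add: power3_eq_cube power2_eq_square)
        also have "\<dots> \<le> C*(K*\<bar>e\<bar>*(T \<mu> - 1)^2)"
          using u C0 by (intro mult_left_mono mult_right_mono) auto
        finally show "\<bar>r (T \<mu> - 1)\<bar> \<le> C*(K*\<bar>e\<bar>)*(T \<mu> - 1)^2" by (simp add: mult.assoc)
      qed
    qed
    also have "\<dots> = C*(K*\<bar>e\<bar>)*W" using ET1sq by simp
    finally show ?thesis .
  qed
  have R2: "\<bar>integral\<^sup>L ?M (\<lambda>\<mu>. r (-q*m \<mu>))\<bar> \<le> C*(4*e^2)^3"
  proof -
    have "\<bar>integral\<^sup>L ?M (\<lambda>\<mu>. r (-q*m \<mu>))\<bar> \<le> integral\<^sup>L ?M (\<lambda>\<mu>. \<bar>r (-q*m \<mu>)\<bar>)"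
      using integral_norm_bound[of ?M "\<lambda>\<mu>. r (-q*m \<mu>)"] by simp
    also have "\<dots> \<le> integral\<^sup>L ?M (\<lambda>\<mu>. C*(4*e^2)^3)"
    proof (rule integral_mono_AE[OF iar2])
      show "integrable ?M (\<lambda>\<mu>. C*(4*e^2)^3)" by simp
      show "AE \<mu> in ?M. \<bar>r (-q*m \<mu>)\<bar> \<le> C*(4*e^2)^3"
        using supp
      proof (rule eventually_mono)
        fix \<mu> :: "nat \<Rightarrow> real" assume H: "\<forall>i<d. \<mu> i \<in> {2*e, -2*e}"
        have u: "\<bar>-q*m \<mu>\<bar> \<le> 4*e^2" using mv(2)[OF H] by simp
        then have "\<bar>-q*m \<mu>\<bar> < \<delta>" using e2 by simp
        then have "\<bar>r (-q*m \<mu>)\<bar> \<le> C*\<bar>-q*m \<mu>\<bar>^3" unfolding r_def by (rule hC)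
        also have "\<dots> \<le> C*(4*e^2)^3"
          using u C0 by (intro mult_left_mono power_mono) auto
        finally show "\<bar>r (-q*m \<mu>)\<bar> \<le> C*(4*e^2)^3" .
      qed
    qed
    also have "\<dots> = C*(4*e^2)^3" by (simp add: prob_space)
    finally show ?thesis .
  qed
  have "B_Ising (pi_star e) \<beta> d - (ln 2 + real d / 2 * ln ((1 + c) / 2) + W/2 - real d / 2 * q^2 * 8 * e^4)
      = integral\<^sup>L ?M (\<lambda>\<mu>. r (T \<mu> - 1)) - real d/2 * integral\<^sup>L ?M (\<lambda>\<mu>. r (-q*m \<mu>))"
    unfolding BA IA L_def[symmetric] using lnN by (simp add: algebra_simps)
  also have "\<bar>\<dots>\<bar> \<le> \<bar>integral\<^sup>L ?M (\<lambda>\<mu>. r (T \<mu> - 1))\<bar> + real d/2 * \<bar>integral\<^sup>L ?M (\<lambda>\<mu>. r (-q*m \<mu>))\<bar>"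
    by (rule order_trans[OF abs_triangle_ineq4]) (simp add: abs_mult)
  also have "\<dots> \<le> C*(K*\<bar>e\<bar>)*W + real d/2 * (C*(4*e^2)^3)"
    using R1 R2 by (intro add_mono mult_left_mono) auto
  finally show ?thesis unfolding K_def by (simp add: algebra_simps)
qed



lemma given_eq:
  fixes \<beta> e :: real and d :: nat
  defines "c \<equiv> exp (-\<beta>)"
  defines "q \<equiv> (1 - c) / (1 + c)"
  shows "4 * e ^ 4 * real d * exp (-2 * \<beta>) * (exp \<beta> - 1) ^ 2
                 * (exp (2 * \<beta>) * (real d - 2) - 2 * real d * exp \<beta> + real d - 2)
                 / ((1 + exp \<beta>) ^ 2 * (1 + exp (-\<beta>)) ^ 2)
         = 4 * real d * (real d - 1) * q^4 * e^4 - 4 * real d * q^2 * e^4"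
proof -
  define E where "E = exp \<beta>"
  have E0: "E > 0" unfolding E_def by simp
  have c: "c = 1/E" unfolding c_def E_def by (simp add: exp_minus field_simps)
  have e3: "exp (2*\<beta>) = E^2" unfolding E_def by (simp add: power2_eq_square exp_add[symmetric])
  have e2: "exp (-2*\<beta>) = 1/E^2" using e3 exp_minus[of "2*\<beta>"] by (simp add: inverse_eq_divide)
  have q: "q = (E - 1)/(E + 1)"
  proof -
    have "E + 1 > 0" using E0 by simp
    then have "(1 - 1/E)/(1 + 1/E) = (E - 1)/(E + 1)" using E0 by (simp add: divide_simps)
    then show ?thesis unfolding q_def c .
  qed
  have em: "exp (-\<beta>) = 1/E" using c c_def by simp
  have E1: "1 + E > 0" using E0 by simp
  define X where "X = E^2 * (real d - 2) - 2 * real d * E + real d - 2"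
  define Z where "Z = 4 * e^4 * real d * (E - 1)^2 * X / (1 + E)^4"
  have d1: "1 + 1/E = (1 + E)/E" using E0 by (simp add: field_simps)
  have L: "4 * e ^ 4 * real d * (1/E^2) * (E - 1) ^ 2 * X / ((1 + E) ^ 2 * (1 + 1/E) ^ 2) = Z"
    unfolding d1 Z_def power_divide using E0 E1 by (simp add: field_simps)
  have q2: "q^2 = (E-1)^2/(1+E)^2" "q^4 = (E-1)^4/(1+E)^4" unfolding q by (simp_all add: power_divide add.commute)
  have R: "4 * real d * (real d - 1) * q^4 * e^4 - 4 * real d * q^2 * e^4 = Z"
  proof -
    define Y where "Y = (real d - 1) * (E-1)^2 - (1+E)^2"
    have s1: "4 * real d * (real d - 1) * q^4 * e^4 - 4 * real d * q^2 * e^4 = 4 * real d * e^4 * q^2 * ((real d - 1) * q^2 - 1)"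
      by (simp add: algebra_simps power4_eq_xxxx power2_eq_square)
    have s2: "(real d - 1) * q^2 - 1 = Y / (1+E)^2" unfolding q2 Y_def using E1 by (simp add: field_simps)
    have s3: "(1+E)^2 * (1+E)^2 = (1+E)^4" by (simp add: power_add[symmetric])
    have "4 * real d * (real d - 1) * q^4 * e^4 - 4 * real d * q^2 * e^4
        = 4 * e^4 * real d * (E-1)^2 * Y / (1+E)^4"
      apply (subst s1)
      apply (subst s2)
      apply (subst q2(1))
      apply (subst s3[symmetric])
      apply simp
      done
    also have "\<dots> = Z" unfolding Z_def X_def Y_def by (simp add: algebra_simps power2_eq_square)
    finally show ?thesis .
  qed
  show ?thesis unfolding e2 e3 em E_def[symmetric] X_def[symmetric] using L R by simp
qed

lemma lin3: "(x::real) \<le> a + b/4 \<Longrightarrow> a \<le> X \<Longrightarrow> b \<le> Y \<Longrightarrow> x \<le> X + Y/4" by linarith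

theorem lemma5p2:
  fixes d :: nat and \<beta> :: real
  assumes "d \<ge> 3" and "\<beta> > 0"
  shows "(\<lambda>\<epsilon>. B_Ising (pi_star \<epsilon>) \<beta> d
            - (ln 2 + real d / 2 * ln ((1 + exp (-\<beta>)) / 2)
               + 4 * \<epsilon> ^ 4 * real d * exp (-2 * \<beta>) * (exp \<beta> - 1) ^ 2
                 * (exp (2 * \<beta>) * (real d - 2) - 2 * real d * exp \<beta> + real d - 2)
                 / ((1 + exp \<beta>) ^ 2 * (1 + exp (-\<beta>)) ^ 2)))
         \<in> O[at 0](\<lambda>\<epsilon>. \<epsilon> ^ 5)"
proof -
  note d = assms(1) and \<beta> = assms(2)
  obtain C \<delta> where C0: "C > 0" and \<delta>0: "\<delta> > 0"
    and hC: "\<And>x::real. \<bar>x\<bar> < \<delta> \<Longrightarrow> \<bar>(1+x)*ln(1+x) - x - x^2/2\<bar> \<le> C*\<bar>x\<bar>^3"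
    using h_cubic by blast
  obtain K2 where K2: "\<And>y::real. \<bar>y\<bar> \<le> 1 \<Longrightarrow> \<bar>(1+y)^d - 1 - real d*y - real d*(real d - 1)/2*y^2\<bar> \<le> K2*\<bar>y\<bar>^3"
    using binom_cubic by blast
  define c where "c = exp (-\<beta>)"
  define q where "q = (1 - c) / (1 + c)"
  have c0: "0 < c" "c < 1" unfolding c_def using \<beta> by auto
  have q0: "0 < q" "q < 1" unfolding q_def using c0 by (auto simp: field_simps)
  define K where "K = real d * 2 * 2^d"
  have K0: "K \<ge> 0" unfolding K_def by simp
  define Kf where "Kf = C*K*(64*\<bar>K2\<bar> + 16*real d^2) + 32*real d*C + 32*\<bar>K2\<bar>"
  define f where "f = (\<lambda>\<epsilon>. B_Ising (pi_star \<epsilon>) \<beta> d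
            - (ln 2 + real d / 2 * ln ((1 + exp (-\<beta>)) / 2)
               + 4 * \<epsilon> ^ 4 * real d * exp (-2 * \<beta>) * (exp \<beta> - 1) ^ 2
                 * (exp (2 * \<beta>) * (real d - 2) - 2 * real d * exp \<beta> + real d - 2)
                 / ((1 + exp \<beta>) ^ 2 * (1 + exp (-\<beta>)) ^ 2)))"
  have ev: "eventually (\<lambda>e::real. e \<noteq> 0 \<and> \<bar>e\<bar> < 1/2 \<and> 4*e^2 < \<delta> \<and> K*\<bar>e\<bar> < \<delta> \<and> K*\<bar>e\<bar> < 1) (at 0)"
  proof -
    have l1: "((\<lambda>e::real. \<bar>e\<bar>) \<longlongrightarrow> 0) (at 0)" by (auto intro!: tendsto_eq_intros)
    have l2: "((\<lambda>e::real. 4*e^2) \<longlongrightarrow> 0) (at 0)" by (auto intro!: tendsto_eq_intros)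
    have l3: "((\<lambda>e::real. K*\<bar>e\<bar>) \<longlongrightarrow> 0) (at 0)" by (auto intro!: tendsto_eq_intros)
    have "eventually (\<lambda>e::real. e \<noteq> 0) (at 0)" by (simp add: eventually_at_filter)
    moreover have "eventually (\<lambda>e::real. \<bar>e\<bar> < 1/2) (at 0)" using order_tendstoD(2)[OF l1, of "1/2"] by simp
    moreover have "eventually (\<lambda>e::real. 4*e^2 < \<delta>) (at 0)" using order_tendstoD(2)[OF l2 \<delta>0] by simp
    moreover have "eventually (\<lambda>e::real. K*\<bar>e\<bar> < \<delta>) (at 0)" using order_tendstoD(2)[OF l3 \<delta>0] by simp
    moreover have "eventually (\<lambda>e::real. K*\<bar>e\<bar> < 1) (at 0)" using order_tendstoD(2)[OF l3, of 1] by simp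
    ultimately show ?thesis by eventually_elim auto
  qed
  have main: "\<bar>f e\<bar> \<le> Kf * \<bar>e\<bar>^5"
    if H: "e \<noteq> 0 \<and> \<bar>e\<bar> < 1/2 \<and> 4*e^2 < \<delta> \<and> K*\<bar>e\<bar> < \<delta> \<and> K*\<bar>e\<bar> < 1" for e :: real
  proof -
    define t where "t = \<bar>e\<bar>"
    have t0: "0 \<le> t" "t \<le> 1" using H unfolding t_def by auto
    define y where "y = 4*q^2*e^2"
    define W where "W = ((1 + y)^d + (1 - y)^d)/2 - 1"
    define R where "R = (\<lambda>y::real. (1+y)^d - 1 - real d*y - real d*(real d - 1)/2*y^2)"
    have e2t: "e^2 = t^2" unfolding t_def by simp
    have qq: "q^2 \<le> 1" using q0 by (intro power_le_one) auto
    have "q^2 * t^2 \<le> 1 * t^2" using qq by (intro mult_right_mono) auto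
    then have y0: "0 \<le> y" "y \<le> 4*t^2" unfolding y_def e2t by auto
    have tt: "t^2 \<le> 1/4"
    proof -
      have "t*t \<le> (1/2)*(1/2)" using H t0 unfolding t_def by (intro mult_mono) auto
      then show ?thesis by (simp add: power2_eq_square)
    qed
    have y1: "\<bar>y\<bar> \<le> 1" "\<bar>-y\<bar> \<le> 1" using y0 tt by auto
    have y3: "\<bar>y\<bar>^3 \<le> 64*t^6"
    proof -
      have "\<bar>y\<bar>^3 \<le> (4*t^2)^3" using y0 by (intro power_mono) auto
      also have "\<dots> = 64*t^6" by (simp add: power_mult_distrib power_mult[symmetric])
      finally show ?thesis .
    qed
    have Rb1: "\<bar>R y\<bar> \<le> \<bar>K2\<bar>*(64*t^6)"
    proof -
      have "\<bar>R y\<bar> \<le> K2*\<bar>y\<bar>^3" unfolding R_def by (rule K2[OF y1(1)])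
      also have "\<dots> \<le> \<bar>K2\<bar>*(64*t^6)" using y3 by (intro order_trans[OF mult_right_mono[of K2 "\<bar>K2\<bar>"]] mult_left_mono) auto
      finally show ?thesis .
    qed
    have Rb2: "\<bar>R (-y)\<bar> \<le> \<bar>K2\<bar>*(64*t^6)"
    proof -
      have "\<bar>R (-y)\<bar> \<le> K2*\<bar>-y\<bar>^3" unfolding R_def by (rule K2[OF y1(2)])
      also have "\<dots> \<le> \<bar>K2\<bar>*(64*t^6)" using y3 by (intro order_trans[OF mult_right_mono[of K2 "\<bar>K2\<bar>"]] mult_left_mono) auto
      finally show ?thesis .
    qed
    have Wexp: "W = (R y + R (-y))/2 + real d*(real d - 1)/2*y^2"
      unfolding W_def R_def by (simp add: field_simps power2_eq_square)
    have Wb: "W \<le> \<bar>K2\<bar>*(64*t^6) + 16*real d^2*t^4"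
    proof -
      have "real d*(real d - 1)/2*y^2 \<le> real d^2 * y^2"
        by (intro mult_right_mono) (auto simp: power2_eq_square algebra_simps)
      also have "\<dots> \<le> real d^2 * (4*t^2)^2" using y0 by (intro mult_left_mono power_mono) auto
      also have "\<dots> = 16*real d^2*t^4" by (simp add: power_mult_distrib power_mult[symmetric])
      finally have "real d*(real d - 1)/2*y^2 \<le> 16*real d^2*t^4" .
      moreover have "(R y + R (-y))/2 \<le> \<bar>K2\<bar>*(64*t^6)" using Rb1 Rb2 by (simp add: abs_le_iff)
      ultimately show ?thesis unfolding Wexp by (intro add_mono)
    qed
    have cb: "\<bar>B_Ising (pi_star e) \<beta> d - (ln 2 + real d / 2 * ln ((1 + c) / 2) + W/2 - real d / 2 * q^2 * 8 * e^4)\<bar>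
          \<le> C * (K * t) * W + real d / 2 * C * (4*e^2)^3"
      using core[OF d \<beta> _ hC C0, of e] H unfolding c_def q_def W_def y_def K_def t_def by (simp add: mult.assoc)
    have fe: "f e = (B_Ising (pi_star e) \<beta> d - (ln 2 + real d / 2 * ln ((1 + c) / 2) + W/2 - real d / 2 * q^2 * 8 * e^4))
        + (R y + R (-y))/4"
      unfolding f_def given_eq unfolding c_def[symmetric] unfolding q_def[symmetric]
      by (simp add: W_def R_def y_def field_simps power2_eq_square power4_eq_xxxx)
    have e6: "(4*e^2)^3 = 64*t^6" unfolding e2t by (simp add: power_mult_distrib power_mult[symmetric])
    have s1: "\<bar>f e\<bar> \<le> C*(K*t)*W + real d/2*C*(4*e^2)^3 + (\<bar>R y\<bar> + \<bar>R (-y)\<bar>)/4"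
    proof -
      have a: "\<bar>R y + R (-y)\<bar> \<le> \<bar>R y\<bar> + \<bar>R (-y)\<bar>" by (rule abs_triangle_ineq)
      have "\<bar>f e\<bar> \<le> \<bar>B_Ising (pi_star e) \<beta> d - (ln 2 + real d / 2 * ln ((1 + c) / 2) + W/2 - real d / 2 * q^2 * 8 * e^4)\<bar>
          + \<bar>R y + R (-y)\<bar>/4"
        unfolding fe by (rule order_trans[OF abs_triangle_ineq]) simp
      then show ?thesis using cb a by (rule lin3)
    qed
    have s2: "C*(K*t)*W \<le> C*(K*t)*(\<bar>K2\<bar>*(64*t^6) + 16*real d^2*t^4)"
      using Wb C0 K0 t0 by (intro mult_left_mono) auto
    have s3: "(\<bar>R y\<bar> + \<bar>R (-y)\<bar>)/4 \<le> \<bar>K2\<bar>*(64*t^6)/2" using Rb1 Rb2 by simp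
    have t75: "t^7 \<le> t^5" "t^6 \<le> t^5" using t0 by (auto intro: power_decreasing)
    have s4: "C*(K*t)*(\<bar>K2\<bar>*(64*t^6) + 16*real d^2*t^4) + real d/2*C*(64*t^6) + \<bar>K2\<bar>*(64*t^6)/2
       = (C*K*64*\<bar>K2\<bar>)*t^7 + (C*K*16*real d^2)*t^5 + (32*real d*C)*t^6 + (32*\<bar>K2\<bar>)*t^6"
      by (simp add: algebra_simps eval_nat_numeral)
    have s5: "(C*K*64*\<bar>K2\<bar>)*t^7 + (C*K*16*real d^2)*t^5 + (32*real d*C)*t^6 + (32*\<bar>K2\<bar>)*t^6
       \<le> (C*K*64*\<bar>K2\<bar>)*t^5 + (C*K*16*real d^2)*t^5 + (32*real d*C)*t^5 + (32*\<bar>K2\<bar>)*t^5"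
      using t75 C0 K0 by (intro add_mono mult_left_mono) auto
    have s6: "(C*K*64*\<bar>K2\<bar>)*t^5 + (C*K*16*real d^2)*t^5 + (32*real d*C)*t^5 + (32*\<bar>K2\<bar>)*t^5 = Kf * \<bar>e\<bar>^5"
      unfolding Kf_def t_def by (simp add: algebra_simps)
    have "\<bar>f e\<bar> \<le> C*(K*t)*(\<bar>K2\<bar>*(64*t^6) + 16*real d^2*t^4) + real d/2*C*(64*t^6) + \<bar>K2\<bar>*(64*t^6)/2"
      using s1 s2 s3 unfolding e6 by linarith
    also have "\<dots> \<le> Kf * \<bar>e\<bar>^5" unfolding s4 s6[symmetric] by (rule s5)
    finally show ?thesis .
  qed
  have "eventually (\<lambda>e. norm (f e) \<le> Kf * norm (e^5)) (at (0::real))"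
    using ev by (rule eventually_mono) (simp add: main power_abs)
  then have "f \<in> O[at 0](\<lambda>e. e^5)" by (rule bigoI)
  then show ?thesis unfolding f_def .
qed


end
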